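(* Let $\rho_{AB},\tau_{AB}\in\mathcal{S}_{\leq}(\mathcal{H}_A\otimes\mathcal{H}_B)$, $d_A=\dim\mathcal{H}_A$, $d_{\min}=\min\{d_A,\dim\mathcal{H}_B\}$, and $\delta:=\bar D(\rho_{AB},\tau_{AB})$. Then $$\big|H_{\min}(A|B)_\rho-H_{\min}(A|B)_\tau\big|\leq\frac{d_A\,d_{\min}\,\delta}{\ln 2\cdot\min\{\mathrm{tr}\,\rho_{AB},\mathrm{tr}\,\tau_{AB}\}}.$$
   Context: Hilbert spaces finite-dimensional; $\mathcal{S}_=(\mathcal{H})$: normalized states; $\mathcal{S}_{\leq}(\mathcal{H})=\{\rho\geq0:0<\mathrm{tr}\,\rho\leq1\}$. Logs base 2. $H_{\min}(A|B)_\rho=\max_{\sigma_B\in\mathcal{S}_=(\mathcal{H}_B)}\sup\{\lambda : 2^{-\lambda}\mathbb{1}_A\otimes\sigma_B\geq\rho_{AB}\}$. Generalized trace distance $\bar D(\rho,\tau)=\max\{\mathrm{tr}\{\rho-\tau\}_+,\mathrm{tr}\{\tau-\rho\}_+\}$, with $\{X\}_+$ the positive part of $X$. *)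

theory Defs
  imports "HOL-Analysis.Analysis"
begin

text \<open>Finite-dimensional Hilbert spaces are modelled as complex^'n for a finite
  index type 'n; operators are complex^'n^'n matrices.  The bipartite space
  H_A (x) H_B is indexed by the product type 'a \<times> 'b.\<close>

definition psd :: "complex^'n^'n \<Rightarrow> bool" where
  "psd M \<longleftrightarrow> (\<forall>i j. M$i$j = cnj (M$j$i)) \<and>
     (\<forall>v::complex^'n. 0 \<le> Re (\<Sum>i\<in>UNIV. \<Sum>j\<in>UNIV. cnj (v$i) * M$i$j * v$j))"

definition norm_state :: "complex^'n^'n \<Rightarrow> bool" where
  "norm_state M \<longleftrightarrow> psd M \<and> trace M = 1"

definition subnorm_state :: "complex^'n^'n \<Rightarrow> bool" where
  "subnorm_state M \<longleftrightarrow> psd M \<and> 0 < Re (trace M) \<and> Re (trace M) \<le> 1"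

definition id_tensor :: "complex^('b::finite)^'b \<Rightarrow> complex^('a::finite \<times> 'b)^('a \<times> 'b)" where
  "id_tensor \<sigma> = (\<chi> p q. if fst p = fst q then \<sigma>$(snd p)$(snd q) else 0)"

text \<open>Positive part {X}_+ of a Hermitian operator X: the unique P with
  P >= 0, P - X >= 0 and P (P - X) = 0 (Jordan decomposition X = P - (P - X)
  into orthogonally supported positive parts).\<close>
definition pos_part :: "complex^'n^'n \<Rightarrow> complex^'n^'n" where
  "pos_part X = (THE P. psd P \<and> psd (P - X) \<and> P ** (P - X) = 0)"

definition gen_trace_dist :: "complex^'n^'n \<Rightarrow> complex^'n^'n \<Rightarrow> real" where
  "gen_trace_dist \<rho> \<tau> = max (Re (trace (pos_part (\<rho> - \<tau>)))) (Re (trace (pos_part (\<tau> - \<rho>))))"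

text \<open>The max over sigma of the sup equals the sup over the union.\<close>
definition Hmin :: "complex^('a::finite \<times> 'b::finite)^('a \<times> 'b) \<Rightarrow> real" where
  "Hmin \<rho> = Sup {l::real. \<exists>\<sigma>::complex^'b^'b. norm_state \<sigma> \<and>
       psd ((2 powr (-l)) *\<^sub>R (id_tensor \<sigma> :: complex^('a \<times> 'b)^('a \<times> 'b)) - \<rho>)}"

end

theory Submission
  imports Defs
begin


definition ip :: "complex^'n \<Rightarrow> complex^'n \<Rightarrow> complex" where
  "ip u v = (\<Sum>i\<in>UNIV. cnj (u$i) * v$i)"

definition herm :: "complex^'n^'n \<Rightarrow> bool" where
  "herm M \<longleftrightarrow> (\<forall>i j. M$i$j = cnj (M$j$i))"

lemma ip_zero_left[simp]: "ip 0 v = 0" and ip_zero_right[simp]: "ip v 0 = 0"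
  by (simp_all add: ip_def)
lemma ip_add_right: "ip u (v + w) = ip u v + ip u w"
  by (simp add: ip_def distrib_left sum.distrib)
lemma ip_add_left: "ip (u + v) w = ip u w + ip v w"
  by (simp add: ip_def distrib_right sum.distrib)
lemma ip_diff_right: "ip u (v - w) = ip u v - ip u w"
  by (simp add: ip_def right_diff_distrib sum_subtractf)
lemma ip_diff_left: "ip (u - v) w = ip u w - ip v w"
  by (simp add: ip_def left_diff_distrib sum_subtractf)
lemma ip_scale_right: "ip u (c *s v) = c * ip u v"
  by (simp add: ip_def sum_distrib_left mult.assoc mult.left_commute)
lemma ip_scale_left: "ip (c *s u) v = cnj c * ip u v"
  by (simp add: ip_def sum_distrib_left mult.assoc mult.left_commute)
lemma ip_sum_right: "ip u (\<Sum>k\<in>K. f k) = (\<Sum>k\<in>K. ip u (f k))"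
  by (induct K rule: infinite_finite_induct) (auto simp: ip_add_right)
lemma ip_sum_left: "ip (\<Sum>k\<in>K. f k) u = (\<Sum>k\<in>K. ip (f k) u)"
  by (induct K rule: infinite_finite_induct) (auto simp: ip_add_left)
lemma ip_cnj: "cnj (ip u v) = ip v u"
  by (simp add: ip_def mult.commute)

lemma ip_self: "ip u u = of_real (\<Sum>i\<in>UNIV. (cmod (u$i))^2)"
  unfolding ip_def of_real_sum
  by (rule sum.cong) (auto, metis complex_norm_square mult.commute of_real_power)
lemma ip_self_Re: "Re (ip u u) = (\<Sum>i\<in>UNIV. (cmod (u$i))^2)"
  by (simp add: ip_self)
lemma ip_self_Im[simp]: "Im (ip u u) = 0"
  by (simp add: ip_self)
lemma ip_self_nonneg: "0 \<le> Re (ip u u)"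
  by (simp add: ip_self_Re sum_nonneg)
lemma ip_self_zero: "Re (ip u u) \<le> 0 \<Longrightarrow> u = 0"
proof -
  assume "Re (ip u u) \<le> 0"
  hence "(\<Sum>i\<in>UNIV. (cmod (u$i))^2) = 0" using ip_self_nonneg[of u] by (simp add: ip_self_Re)
  hence "\<forall>i\<in>UNIV. (cmod (u$i))^2 = 0" by (subst (asm) sum_nonneg_eq_0_iff) auto
  thus "u = 0" by (simp add: vec_eq_iff)
qed
lemma ip_self_eq: "Re (ip u u) = (norm u)^2"
  by (simp add: ip_self_Re norm_vec_def L2_set_def real_sqrt_pow2 sum_nonneg)

lemma mv_add: "(A::complex^'n^'m) *v (x + y) = A *v x + A *v y"
  by (simp add: vec_eq_iff matrix_vector_mult_def distrib_left sum.distrib)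
lemma mv_diff: "(A::complex^'n^'m) *v (x - y) = A *v x - A *v y"
  by (simp add: vec_eq_iff matrix_vector_mult_def right_diff_distrib sum_subtractf)
lemma mv_scale: "(A::complex^'n^'m) *v (c *s x) = c *s (A *v x)"
  by (simp add: vec_eq_iff matrix_vector_mult_def sum_distrib_left mult.left_commute)
lemma mv_sum: "(A::complex^'n^'m) *v (\<Sum>k\<in>K. f k) = (\<Sum>k\<in>K. A *v f k)"
  by (induct K rule: infinite_finite_induct) (auto simp: mv_add)
lemma mv_madd: "((A::complex^'n^'m) + B) *v x = A *v x + B *v x"
  by (simp add: vec_eq_iff matrix_vector_mult_def distrib_right sum.distrib)
lemma mv_mdiff: "((A::complex^'n^'m) - B) *v x = A *v x - B *v x"
  by (simp add: vec_eq_iff matrix_vector_mult_def left_diff_distrib sum_subtractf)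
lemma mscaleR_nth: "((c::real) *\<^sub>R (A::complex^'n^'m))$i$j = complex_of_real c * A$i$j"
  by (simp only: vector_scaleR_component) (simp add: scaleR_conv_of_real)
lemma mv_mscaleR: "((c::real) *\<^sub>R (A::complex^'n^'m)) *v x = (complex_of_real c) *s (A *v x)"
  by (simp only: vec_eq_iff matrix_vector_mult_def vec_lambda_beta mscaleR_nth vector_scalar_mult_def) (simp add: sum_distrib_left mult.assoc)
lemma mv_msum: "(\<Sum>k\<in>K. (f k::complex^'n^'m)) *v x = (\<Sum>k\<in>K. f k *v x)"
  by (induct K rule: infinite_finite_induct) (auto simp: mv_madd)

lemma psd_iff: "psd M \<longleftrightarrow> herm M \<and> (\<forall>v. 0 \<le> Re (ip v (M *v v)))"
proof -
  have "(\<Sum>i\<in>UNIV. \<Sum>j\<in>UNIV. cnj (v$i) * M$i$j * v$j) = ip v (M *v v)" for v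
    by (simp add: ip_def matrix_vector_mult_def sum_distrib_left mult.assoc)
  thus ?thesis by (simp add: psd_def herm_def)
qed

lemma herm_ip: "herm M \<Longrightarrow> ip u (M *v v) = ip (M *v u) v"
proof -
  assume h: "herm M"
  have "ip u (M *v v) = (\<Sum>i\<in>UNIV. \<Sum>j\<in>UNIV. cnj (u$i) * M$i$j * v$j)"
    by (simp add: ip_def matrix_vector_mult_def sum_distrib_left mult.assoc)
  also have "\<dots> = (\<Sum>j\<in>UNIV. \<Sum>i\<in>UNIV. cnj (u$i) * M$i$j * v$j)" by (rule sum.swap)
  also have "\<dots> = (\<Sum>j\<in>UNIV. \<Sum>i\<in>UNIV. cnj (M$j$i * u$i) * v$j)"
  proof (rule sum.cong[OF refl], rule sum.cong[OF refl])
    fix j i have "M$i$j = cnj (M$j$i)" using h herm_def by auto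
    thus "cnj (u$i) * M$i$j * v$j = cnj (M$j$i * u$i) * v$j" by simp
  qed
  also have "\<dots> = (\<Sum>j\<in>UNIV. cnj (\<Sum>i\<in>UNIV. M$j$i * u$i) * v$j)"
    by (simp only: cnj_sum sum_distrib_right)
  also have "\<dots> = ip (M *v u) v"
    by (simp only: ip_def matrix_vector_mult_def vec_lambda_beta)
  finally show ?thesis .
qed

lemma herm_form_real: "herm M \<Longrightarrow> Im (ip v (M *v v)) = 0"
proof -
  assume "herm M"
  hence "ip v (M *v v) = cnj (ip v (M *v v))" by (simp add: herm_ip ip_cnj)
  thus ?thesis by (metis cnj.simps(2) neg_equal_zero)
qed

lemma herm_add: assumes "herm A" "herm B" shows "herm (A + B)"
  unfolding herm_def
proof (intro allI)
  fix i j have "A$i$j = cnj (A$j$i)" "B$i$j = cnj (B$j$i)" using assms herm_def by blast+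
  thus "(A + B)$i$j = cnj ((A + B)$j$i)" by simp
qed
lemma herm_diff: assumes "herm A" "herm B" shows "herm (A - B)"
  unfolding herm_def
proof (intro allI)
  fix i j have "A$i$j = cnj (A$j$i)" "B$i$j = cnj (B$j$i)" using assms herm_def by blast+
  thus "(A - B)$i$j = cnj ((A - B)$j$i)" by simp
qed
lemma herm_scaleR: assumes "herm A" shows "herm ((c::real) *\<^sub>R A)"
  unfolding herm_def
proof (intro allI)
  fix i j have "A$i$j = cnj (A$j$i)" using assms herm_def by blast
  thus "(c *\<^sub>R A)$i$j = cnj ((c *\<^sub>R A)$j$i)" by (simp add: mscaleR_nth)
qed

lemma psd_add: "psd A \<Longrightarrow> psd B \<Longrightarrow> psd (A + B)"
  by (simp add: psd_iff herm_add mv_madd ip_add_right add_nonneg_nonneg)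
lemma psd_scaleR: "psd A \<Longrightarrow> 0 \<le> c \<Longrightarrow> psd ((c::real) *\<^sub>R A)"
  by (simp add: psd_iff herm_scaleR mv_mscaleR ip_scale_right)
lemma psd_trans: "psd (A - B) \<Longrightarrow> psd (B - C) \<Longrightarrow> psd (A - C)"
  using psd_add[of "A - B" "B - C"] by simp

lemma ip_axis: "ip (axis i 1) w = w$i"
  unfolding ip_def by (subst sum.remove[of _ i]) (auto simp: axis_def)
lemma mv_axis: "(A *v axis i 1)$k = A$k$i"
  unfolding matrix_vector_mult_def by (subst sum.remove[of _ i]) (auto simp: axis_def)

lemma psd_diag: "psd A \<Longrightarrow> 0 \<le> Re (A$i$i) \<and> Im (A$i$i) = 0"
proof -
  assume p: "psd A"
  have "ip (axis i 1) (A *v axis i 1) = A$i$i"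
    by (simp add: ip_axis mv_axis)
  thus ?thesis using p unfolding psd_iff by (metis herm_form_real)
qed
lemma psd_trace: "psd A \<Longrightarrow> 0 \<le> Re (trace A)"
  by (simp add: trace_def sum_nonneg psd_diag)
lemma psd_trace_real: "psd A \<Longrightarrow> trace A = of_real (Re (trace A))"
  by (simp add: trace_def complex_eq_iff psd_diag Im_sum)


definition qf :: "complex^'n^'n \<Rightarrow> complex^'n \<Rightarrow> real" where
  "qf M v = Re (ip v (M *v v))"

lemma psd_qf: "psd P \<Longrightarrow> 0 \<le> qf P v"
  by (simp add: psd_iff qf_def)

lemma cs_real:
  fixes a B c :: real
  assumes h: "\<And>t. 0 \<le> a - 2*t*B + t^2*B*c" and "0 \<le> a" "0 \<le> c" "0 \<le> B"
  shows "B \<le> a*c"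
proof (cases "c = 0")
  case True
  have "\<not> B > 0"
  proof
    assume Bp: "B > 0"
    have e: "2*((a+1)/B)*B = 2*(a+1)" using Bp by simp
    have "0 \<le> a - 2*((a+1)/B)*B" using h[of "(a+1)/B"] True by simp
    thus False unfolding e using assms by simp
  qed
  thus ?thesis using True assms by simp
next
  case False
  hence cp: "c > 0" using assms by simp
  have "0 \<le> a - 2*(1/c)*B + (1/c)^2*B*c" using h[of "1/c"] .
  also have "\<dots> = a - B/c" using cp by (simp add: power2_eq_square field_simps)
  finally show ?thesis using cp by (simp add: field_simps mult.commute)
qed

lemma cnj_mult_self: "cnj c * c = of_real ((cmod c)^2)"
  by (metis complex_norm_square mult.commute)
lemma mult_cnj_self: "c * cnj c = of_real ((cmod c)^2)"
  by (metis complex_norm_square)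

lemma psd_cs:
  assumes p: "psd P"
  shows "(cmod (ip x (P *v y)))^2 \<le> qf P x * qf P y"
proof -
  have hP: "herm P" using p psd_iff by blast
  define b where "b = ip x (P *v y)"
  define B where "B = (cmod b)^2"
  have bb: "cnj b * b = of_real B" "b * cnj b = of_real B"
    unfolding B_def by (rule cnj_mult_self, rule mult_cnj_self)
  have yx: "ip y (P *v x) = cnj b"
    unfolding b_def using herm_ip[OF hP, of y x] ip_cnj by metis
  have rx: "ip x (P *v x) = of_real (qf P x)"
    using herm_form_real[OF hP, of x] by (simp add: qf_def complex_eq_iff)
  have ry: "ip y (P *v y) = of_real (qf P y)"
    using herm_form_real[OF hP, of y] by (simp add: qf_def complex_eq_iff)
  have key: "0 \<le> qf P x - 2*t*B + t^2*B*qf P y" for t :: real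
  proof -
    define s where "s = - (of_real t) * cnj b"
    have "ip (x + s *s y) (P *v (x + s *s y)) =
        ip x (P *v x) + s * ip x (P *v y) + cnj s * ip y (P *v x) + cnj s * s * ip y (P *v y)"
      by (simp add: mv_add mv_scale ip_add_left ip_add_right ip_scale_left ip_scale_right algebra_simps)
    also have "\<dots> = of_real (qf P x) - 2 * of_real t * (b * cnj b) + (of_real t)^2 * (b * cnj b) * of_real (qf P y)"
      unfolding rx ry yx s_def b_def[symmetric]
      by (simp add: algebra_simps power2_eq_square)
    also have "\<dots> = of_real (qf P x) - 2 * of_real t * of_real B + (of_real t)^2 * of_real B * of_real (qf P y)"
      unfolding bb(2) ..
    finally have "qf P (x + s *s y) = qf P x - 2*t*B + t^2*B*qf P y"
      unfolding qf_def by simp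
    thus ?thesis using psd_qf[OF p] by metis
  qed
  have "B \<le> qf P x * qf P y"
    by (rule cs_real[OF key psd_qf[OF p] psd_qf[OF p]]) (simp add: B_def)
  thus ?thesis unfolding B_def b_def .
qed

lemma psd_cs_sqrt:
  assumes p: "psd P"
  shows "cmod (ip x (P *v y)) \<le> sqrt (qf P x) * sqrt (qf P y)"
  using psd_cs[OF p, of x y] by (simp add: real_le_rsqrt real_sqrt_mult[symmetric])

lemma psd_block:
  assumes p: "psd P" and fin: "finite K"
  shows "qf P (\<Sum>k\<in>K. x k) \<le> (\<Sum>k\<in>K. sqrt (qf P (x k)))^2"
proof -
  have "qf P (\<Sum>k\<in>K. x k) = (\<Sum>l\<in>K. \<Sum>k\<in>K. Re (ip (x k) (P *v x l)))"
    by (simp add: qf_def mv_sum ip_sum_left ip_sum_right Re_sum)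
  also have "\<dots> \<le> (\<Sum>l\<in>K. \<Sum>k\<in>K. sqrt (qf P (x k)) * sqrt (qf P (x l)))"
    by (intro sum_mono) (meson complex_Re_le_cmod order_trans psd_cs_sqrt[OF p])
  also have "\<dots> = (\<Sum>k\<in>K. sqrt (qf P (x k)))^2"
    by (simp add: power2_eq_square sum_product mult.commute)
  finally show ?thesis .
qed

lemma qf_scale: "qf P (c *s v) = (cmod c)^2 * qf P v"
proof -
  have "ip (c *s v) (P *v (c *s v)) = (cnj c * c) * ip v (P *v v)"
    by (simp add: mv_scale ip_scale_left ip_scale_right)
  also have "cnj c * c = of_real ((cmod c)^2)" by (rule cnj_mult_self)
  finally show ?thesis by (simp add: qf_def)
qed

lemma qf_axis: "qf P (axis i 1) = Re (P$i$i)"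
  by (simp add: qf_def ip_axis mv_axis)

lemma psd_le_trace:
  assumes p: "psd P"
  shows "qf P v \<le> Re (trace P) * Re (ip v v)"
proof -
  have "qf P v = qf P (\<Sum>i\<in>UNIV. v$i *s axis i 1)" by (simp add: basis_expansion)
  also have "\<dots> \<le> (\<Sum>i\<in>UNIV. sqrt (qf P (v$i *s axis i 1)))^2"
    by (rule psd_block[OF p]) simp
  also have "\<dots> = (\<Sum>i\<in>UNIV. cmod (v$i) * sqrt (Re (P$i$i)))^2"
    by (simp add: qf_scale qf_axis real_sqrt_mult)
  also have "\<dots> \<le> (\<Sum>i\<in>UNIV. (cmod (v$i))^2) * (\<Sum>i\<in>UNIV. (sqrt (Re (P$i$i)))^2)"
    by (rule Cauchy_Schwarz_ineq_sum)
  also have "\<dots> = Re (ip v v) * Re (trace P)"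
    using psd_diag[OF p] by (simp add: ip_self_Re trace_def Re_sum)
  finally show ?thesis by (simp add: mult.commute)
qed

lemma herm_mat1: "herm (mat 1 :: complex^'n^'n)"
  by (simp add: herm_def mat_def)

lemma psd_mat1: "psd (mat 1 :: complex^'n^'n)"
  by (simp add: psd_iff herm_mat1 ip_self_nonneg)

lemma psd_le_trace_id:
  assumes p: "psd P"
  shows "psd ((Re (trace P)) *\<^sub>R mat 1 - P)"
proof -
  have "herm P" using p psd_iff by blast
  hence h: "herm ((Re (trace P)) *\<^sub>R mat 1 - P)" by (simp add: herm_diff herm_scaleR herm_mat1)
  have "0 \<le> Re (ip v (((Re (trace P)) *\<^sub>R mat 1 - P) *v v))" for v
    using psd_le_trace[OF p, of v]
    by (simp add: mv_mdiff mv_mscaleR ip_diff_right ip_scale_right qf_def)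
  with h show ?thesis by (simp add: psd_iff)
qed



definition orthonormal :: "(complex^'n) set \<Rightarrow> bool" where
  "orthonormal S \<longleftrightarrow> (\<forall>s\<in>S. \<forall>t\<in>S. ip s t = (if s = t then 1 else 0))"

lemma ip_sum_delta:
  assumes "orthonormal S" "finite S" "t \<in> S"
  shows "ip t (\<Sum>s\<in>S. c s *s s) = c t"
proof -
  have "ip t (\<Sum>s\<in>S. c s *s s) = (\<Sum>s\<in>S. c s * ip t s)" by (simp add: ip_sum_right ip_scale_right)
  also have "\<dots> = (\<Sum>s\<in>S. if s = t then c s else 0)"
    using assms(1,3) unfolding orthonormal_def by (intro sum.cong) auto
  also have "\<dots> = c t" using assms(2,3) by simp
  finally show ?thesis .
qed

lemma on_indep: assumes "orthonormal S" "finite S" shows "vec.independent S"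
  unfolding vec.independent_explicit
proof (intro conjI allI impI ballI)
  fix c v assume "(\<Sum>v\<in>S. c v *s v) = 0" "v \<in> S"
  thus "c v = 0" using ip_sum_delta[OF assms \<open>v \<in> S\<close>, of c] by simp
qed (fact assms(2))

lemma on_expand:
  fixes v :: "complex^'n"
  assumes on: "orthonormal S" and fin: "finite S" and card: "card S = CARD('n)"
  shows "v = (\<Sum>s\<in>S. ip s v *s s)"
proof -
  have "UNIV \<subseteq> vec.span S"
    using vec.card_eq_dim[of S UNIV] on_indep[OF on fin] card fin by (simp add: vec_dim_card card_cart_basis)
  hence "v \<in> vec.span S" by auto
  then obtain u where u: "v = (\<Sum>s\<in>S. u s *s s)" using vec.span_finite[OF fin] by auto
  have "ip t v = u t" if "t \<in> S" for t using ip_sum_delta[OF on fin that] u by simp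
  hence "(\<Sum>s\<in>S. ip s v *s s) = (\<Sum>s\<in>S. u s *s s)" by (intro sum.cong) auto
  with u show ?thesis by simp
qed

lemma ext_orth:
  assumes on: "orthonormal S" and fin: "finite S" and card: "card S < CARD('n)"
  shows "\<exists>w::complex^'n. w \<noteq> 0 \<and> (\<forall>s\<in>S. ip s w = 0)"
proof -
  have "vec.dim (vec.span S) = card S" using vec.dim_span_eq_card_independent[OF on_indep[OF on fin]] .
  hence "vec.span S \<noteq> UNIV" using card vec_dim_card by (metis less_irrefl)
  then obtain x :: "complex^'n" where x: "x \<notin> vec.span S" by auto
  define w where "w = x - (\<Sum>s\<in>S. ip s x *s s)"
  have "w \<noteq> 0"
  proof
    assume "w = 0"
    hence "x = (\<Sum>s\<in>S. ip s x *s s)" by (simp add: w_def)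
    also have "\<dots> \<in> vec.span S" by (intro vec.span_sum vec.span_scale vec.span_base)
    finally show False using x by simp
  qed
  moreover have "ip t w = 0" if "t \<in> S" for t
    using ip_sum_delta[OF on fin that, of "\<lambda>s. ip s x"] by (simp add: w_def ip_diff_right)
  ultimately show ?thesis by blast
qed

lemma lin_quad:
  fixes b c :: real
  assumes h: "\<And>t. 2*t*b + t^2*c \<le> 0"
  shows "b = 0"
proof (rule ccontr)
  assume b: "b \<noteq> 0"
  define d where "d = \<bar>c\<bar> + 1"
  define t where "t = b / d"
  have pos: "d > 0" by (simp add: d_def)
  have "2*t*b + t^2*c = b^2 * (2*d + c) / d^2"
    unfolding t_def using pos by (simp add: field_simps power2_eq_square)
  moreover have "2*d + c > 0" unfolding d_def by (cases "c \<ge> 0") simp_all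
  hence "b^2 * (2*d + c) / d^2 > 0"
    using b pos by (intro divide_pos_pos mult_pos_pos) auto
  ultimately show False using h[of t] by simp
qed

lemma scaleR_as_s: "(c::real) *\<^sub>R (v::complex^'n) = complex_of_real c *s v"
  by (simp only: vec_eq_iff vector_scaleR_component vector_scalar_mult_def vec_lambda_beta)
     (simp add: scaleR_conv_of_real)

lemma qf_add: assumes "herm X"
  shows "qf X (v + w) = qf X v + qf X w + 2 * Re (ip w (X *v v))"
proof -
  have "ip v (X *v w) = cnj (ip w (X *v v))" using herm_ip[OF assms, of v w] ip_cnj by metis
  hence "Re (ip v (X *v w)) = Re (ip w (X *v v))" by simp
  thus ?thesis by (simp add: qf_def mv_add ip_add_left ip_add_right)
qed

lemma qf_mat1: "qf (mat 1) v = Re (ip v v)"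
  by (simp add: qf_def)

lemma qf_scaleR: "qf X ((c::real) *\<^sub>R v) = c^2 * qf X v"
  by (simp add: scaleR_as_s qf_scale)

lemma qf_zero[simp]: "qf X 0 = 0"
  by (simp add: qf_def)

lemma cont_nth: "continuous_on A (\<lambda>v::complex^'n. v$i)"
  by (rule linear_continuous_on, rule bounded_linear_vec_nth)

lemma cont_ip: "continuous_on A (\<lambda>v::complex^'n. ip s v)"
  unfolding ip_def by (intro continuous_intros cont_nth)

lemma qf_expand: "qf X v = Re (\<Sum>i\<in>UNIV. cnj (v$i) * (\<Sum>j\<in>UNIV. X$i$j * v$j))"
  by (simp add: qf_def ip_def matrix_vector_mult_def)

lemma cont_qf: "continuous_on A (\<lambda>v::complex^'n. qf X v)"
  unfolding qf_expand by (intro continuous_intros cont_nth)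

lemma ip_scaleR_right: "ip s ((c::real) *\<^sub>R v) = of_real c * ip s v"
  by (simp add: scaleR_as_s ip_scale_right)
lemma ip_scaleR_left: "ip ((c::real) *\<^sub>R v) s = of_real c * ip v s"
  by (simp add: scaleR_as_s ip_scale_left)

lemma eig_step:
  fixes X :: "complex^'n^'n"
  assumes hX: "herm X" and on: "orthonormal S" and fin: "finite S"
    and eig: "\<forall>s\<in>S. X *v s = complex_of_real (\<mu> s) *s s" and card: "card S < CARD('n)"
  shows "\<exists>v \<mu>v. ip v v = 1 \<and> (\<forall>s\<in>S. ip s v = 0) \<and> X *v v = complex_of_real \<mu>v *s v"
proof -
  define W where "W = {v::complex^'n. \<forall>s\<in>S. ip s v = 0}"
  have Wadd: "v + w \<in> W" if "v \<in> W" "w \<in> W" for v w using that by (simp add: W_def ip_add_right)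
  have Wscale: "c *s v \<in> W" if "v \<in> W" for v c using that by (simp add: W_def ip_scale_right)
  have WscaleR: "c *\<^sub>R v \<in> W" if "v \<in> W" for v c using that by (simp add: W_def ip_scaleR_right)
  define K where "K = W \<inter> sphere 0 1"
  have "W = (\<Inter>s\<in>S. {v. ip s v = 0})" by (auto simp: W_def)
  hence "closed W" by (auto intro!: closed_INT closed_Collect_eq cont_ip continuous_on_const)
  hence compK: "compact K" unfolding K_def by (intro closed_Int_compact compact_sphere)
  obtain w0 where w0: "w0 \<noteq> 0" "\<forall>s\<in>S. ip s w0 = 0" using ext_orth[OF on fin card] by blast
  have "(1 / norm w0) *\<^sub>R w0 \<in> K"
    using w0 WscaleR[of w0 "1/norm w0"] by (auto simp: K_def W_def)
  hence Kne: "K \<noteq> {}" by auto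
  obtain v where vK: "v \<in> K" and vmax: "\<forall>y\<in>K. qf X y \<le> qf X v"
    using continuous_attains_sup[OF compK Kne cont_qf] by blast
  define \<mu> where "\<mu> = qf X v"
  have vW: "v \<in> W" and nv: "norm v = 1" using vK by (auto simp: K_def)
  have ipvv: "Re (ip v v) = 1" using nv by (simp add: ip_self_eq)
  have ipvv': "ip v v = 1" using ipvv by (simp add: complex_eq_iff)
  have bound: "qf X u \<le> \<mu> * Re (ip u u)" if "u \<in> W" for u
  proof (cases "u = 0")
    case True thus ?thesis by simp
  next
    case False
    hence np: "norm u > 0" by simp
    have "(1 / norm u) *\<^sub>R u \<in> K" using that WscaleR np by (auto simp: K_def)
    hence "qf X ((1 / norm u) *\<^sub>R u) \<le> \<mu>" using vmax \<mu>_def by blast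
    hence "qf X u / (norm u)^2 \<le> \<mu>" by (simp add: qf_scaleR power_divide)
    hence "qf X u \<le> \<mu> * (norm u)^2" using np by (simp add: divide_le_eq)
    thus ?thesis by (simp add: ip_self_eq)
  qed
  define r where "r = X *v v - complex_of_real \<mu> *s v"
  have reW: "Re (ip w r) = 0" if wW: "w \<in> W" for w
  proof -
    have "2*t*Re (ip w r) + t^2*(qf X w - \<mu> * Re (ip w w)) \<le> 0" for t :: real
    proof -
      have "v + t *\<^sub>R w \<in> W" using vW wW Wadd WscaleR by blast
      hence b: "qf X (v + t *\<^sub>R w) \<le> \<mu> * qf (mat 1) (v + t *\<^sub>R w)"
        using bound by (simp add: qf_mat1)
      have e1: "qf X (v + t *\<^sub>R w) = \<mu> + t^2 * qf X w + 2 * t * Re (ip w (X *v v))"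
        by (simp add: qf_add[OF hX] qf_scaleR ip_scaleR_left \<mu>_def)
      have e2: "qf (mat 1) (v + t *\<^sub>R w) = 1 + t^2 * Re (ip w w) + 2 * t * Re (ip w v)"
        by (simp only: qf_add[OF herm_mat1] qf_scaleR) (simp add: qf_mat1 ip_scaleR_left ipvv)
      have e3: "Re (ip w r) = Re (ip w (X *v v)) - \<mu> * Re (ip w v)"
        by (simp add: r_def ip_diff_right ip_scale_right)
      show ?thesis using b unfolding e1 e2 e3 by (simp add: algebra_simps)
    qed
    thus ?thesis by (rule lin_quad)
  qed
  have ipwr: "ip w r = 0" if wW: "w \<in> W" for w
  proof -
    have "Re (ip (\<i> *s w) r) = 0" using reW Wscale wW by blast
    hence "Im (ip w r) = 0" by (simp add: ip_scale_left)
    thus ?thesis using reW[OF wW] by (simp add: complex_eq_iff)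
  qed
  have rW: "r \<in> W" unfolding W_def
  proof (intro CollectI ballI)
    fix s assume sS: "s \<in> S"
    have "ip s (X *v v) = ip (X *v s) v" by (rule herm_ip[OF hX])
    also have "\<dots> = 0" using eig sS vW by (simp add: ip_scale_left W_def)
    finally show "ip s r = 0" using vW sS by (simp add: r_def ip_diff_right ip_scale_right W_def)
  qed
  have "r = 0" using ipwr[OF rW] ip_self_zero[of r] by simp
  hence "X *v v = complex_of_real \<mu> *s v" by (simp add: r_def)
  thus ?thesis using ipvv' vW by (auto simp: W_def)
qed

lemma spectral_aux:
  fixes X :: "complex^'n^'n"
  assumes hX: "herm X"
  shows "m \<le> CARD('n) \<Longrightarrow> \<exists>S \<mu>. orthonormal S \<and> finite S \<and> card S = m \<and>
            (\<forall>s\<in>S. X *v s = complex_of_real (\<mu> s) *s s)"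
proof (induct m)
  case 0 show ?case by (rule exI[of _ "{}"]) (simp add: orthonormal_def)
next
  case (Suc m)
  then obtain S \<mu> where S: "orthonormal S" "finite S" "card S = m"
    "\<forall>s\<in>S. X *v s = complex_of_real (\<mu> s) *s s" by auto
  obtain v \<mu>v where v: "ip v v = 1" "\<forall>s\<in>S. ip s v = 0" "X *v v = complex_of_real \<mu>v *s v"
    using eig_step[OF hX S(1,2,4)] S(3) Suc(2) by auto
  have vS: "v \<notin> S" using v(1,2) by force
  have on': "orthonormal (insert v S)"
    using S(1) v(1,2) vS unfolding orthonormal_def
    by (auto, metis ip_cnj complex_cnj_zero)+
  show ?case
    apply (rule exI[of _ "insert v S"], rule exI[of _ "\<mu>(v := \<mu>v)"])
    using on' S vS v by auto
qed

lemma spectral: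
  fixes X :: "complex^'n^'n"
  assumes hX: "herm X"
  shows "\<exists>S \<mu>. orthonormal S \<and> finite S \<and> card S = CARD('n) \<and>
            (\<forall>s\<in>S. X *v s = complex_of_real (\<mu> s) *s s)"
  using spectral_aux[OF hX] by simp



definition outer :: "complex^'n \<Rightarrow> complex^'n^'n" where
  "outer s = (\<chi> i j. s$i * cnj (s$j))"

lemma mv_outer: "outer s *v w = ip s w *s s"
  by (simp add: vec_eq_iff outer_def matrix_vector_mult_def ip_def sum_distrib_left mult_ac)

lemma herm_outer: "herm (outer s)"
  by (simp add: herm_def outer_def mult.commute)

lemma psd_outer: "psd (outer s)"
proof -
  have "ip w (outer s *v w) = ip s w * cnj (ip s w)" for w
    by (simp add: mv_outer ip_scale_right ip_cnj mult.commute)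
  thus ?thesis by (simp add: psd_iff herm_outer mult_cnj_self)
qed

lemma psd_zero: "psd (0::complex^'n^'n)"
  by (simp add: psd_iff herm_def)

lemma psd_sum: "(\<And>k. k \<in> K \<Longrightarrow> psd (f k)) \<Longrightarrow> psd (\<Sum>k\<in>K. (f k :: complex^'n^'n))"
  by (induct K rule: infinite_finite_induct) (auto simp: psd_zero psd_add)

lemma mat_eq_action: "(\<And>w. (A::complex^'n^'m) *v w = B *v w) \<Longrightarrow> A = B"
  by (metis mv_axis vec_eq_iff)

lemma mv_smult_sum: "(A::complex^'n^'n) *v (\<Sum>s\<in>S. c s *s s) = (\<Sum>s\<in>S. c s *s (A *v s))"
  by (simp add: mv_sum mv_scale)

lemma pos_part_eig:
  fixes X P :: "complex^'n^'n"
  assumes hX: "herm X" and pP: "psd P" and pN: "psd (P - X)" and z: "P ** (P - X) = 0"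
    and eu: "X *v u = complex_of_real \<mu> *s u"
  shows "P *v u = complex_of_real (max \<mu> 0) *s u"
proof -
  define N where "N = P - X"
  have hP: "herm P" using pP psd_iff by blast
  have hN: "herm N" using pN psd_iff N_def by blast
  have PN: "P *v (N *v w) = 0" for w
    by (simp add: matrix_vector_mul_assoc z[folded N_def])
  have PP: "P *v (P *v w) = P *v (X *v w)" for w
    using PN[of w] by (simp add: N_def mv_mdiff mv_diff)
  show ?thesis
  proof (cases "\<mu> \<le> 0")
    case True
    have "Re (ip (P *v u) (P *v u)) = Re (ip u (P *v (P *v u)))" by (simp add: herm_ip[OF hP])
    also have "\<dots> = \<mu> * qf P u" by (simp add: PP eu mv_scale ip_scale_right qf_def)
    also have "\<dots> \<le> 0" using True psd_qf[OF pP, of u] by (simp add: mult_nonpos_nonneg)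
    finally have "P *v u = 0" by (rule ip_self_zero)
    thus ?thesis using True by simp
  next
    case False
    have Nz: "N *v z = P *v z - X *v z" for z by (simp add: N_def mv_mdiff)
    have NN: "N *v (N *v u) = - (X *v (N *v u))"
      using Nz[of "N *v u"] PN[of u] by simp
    have "Re (ip (N *v u) (N *v u)) = Re (ip u (N *v (N *v u)))" by (simp add: herm_ip[OF hN])
    also have "\<dots> = - Re (ip u (X *v (N *v u)))"
      by (simp add: NN ip_def sum_negf[symmetric] Re_sum[symmetric])
    also have "\<dots> = - Re (ip (X *v u) (N *v u))" by (simp add: herm_ip[OF hX])
    also have "\<dots> = - (\<mu> * qf N u)" by (simp add: eu ip_scale_left qf_def)
    also have "\<dots> \<le> 0" using False psd_qf[OF pN, of u, folded N_def] by simp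
    finally have "N *v u = 0" by (rule ip_self_zero)
    hence "P *v u = X *v u" by (simp add: N_def mv_mdiff)
    thus ?thesis using False eu by simp
  qed
qed

lemma pos_part_props:
  fixes X :: "complex^'n^'n"
  assumes hX: "herm X"
  shows "psd (pos_part X) \<and> psd (pos_part X - X)"
proof -
  obtain S \<mu> where on: "orthonormal S" and fin: "finite S" and card: "card S = CARD('n)"
    and eig: "\<forall>s\<in>S. X *v s = complex_of_real (\<mu> s) *s s"
    using spectral[OF hX] by blast
  have exp: "w = (\<Sum>s\<in>S. ip s w *s s)" for w using on_expand[OF on fin card] .
  have Xw: "X *v w = (\<Sum>s\<in>S. (of_real (\<mu> s) * ip s w) *s s)" for w
  proof -
    have "X *v w = (\<Sum>s\<in>S. ip s w *s (X *v s))" by (subst exp[of w]) (rule mv_smult_sum)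
    also have "\<dots> = (\<Sum>s\<in>S. (of_real (\<mu> s) * ip s w) *s s)"
      using eig by (intro sum.cong) (auto simp: vector_smult_assoc mult.commute)
    finally show ?thesis .
  qed
  define P where "P = (\<Sum>s\<in>S. max (\<mu> s) 0 *\<^sub>R outer s)"
  define N where "N = (\<Sum>s\<in>S. max (- \<mu> s) 0 *\<^sub>R outer s)"
  have Pw: "P *v w = (\<Sum>s\<in>S. (of_real (max (\<mu> s) 0) * ip s w) *s s)" for w
    by (simp add: P_def mv_msum mv_mscaleR mv_outer vector_smult_assoc)
  have Nw: "N *v w = (\<Sum>s\<in>S. (of_real (max (- \<mu> s) 0) * ip s w) *s s)" for w
    by (simp add: N_def mv_msum mv_mscaleR mv_outer vector_smult_assoc)
  have pP: "psd P" unfolding P_def by (intro psd_sum psd_scaleR psd_outer) auto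
  have pN: "psd N" unfolding N_def by (intro psd_sum psd_scaleR psd_outer) auto
  have PXN: "P - X = N"
  proof (rule mat_eq_action)
    fix w
    have "P *v w = X *v w + N *v w"
      unfolding Pw Xw Nw sum.distrib[symmetric] vector_sadd_rdistrib[symmetric]
      by (intro sum.cong refl, rule arg_cong[where f = "\<lambda>c. c *s _"])
         (simp add: distrib_right[symmetric] max_def)
    thus "(P - X) *v w = N *v w" by (simp add: mv_mdiff)
  qed
  have Pt: "P *v t = of_real (max (\<mu> t) 0) *s t" if "t \<in> S" for t
  proof -
    have "P *v t = (\<Sum>s\<in>S. (of_real (max (\<mu> s) 0) * ip s t) *s s)" by (rule Pw)
    also have "\<dots> = (\<Sum>s\<in>S. if s = t then of_real (max (\<mu> t) 0) *s t else 0)"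
      using on that unfolding orthonormal_def by (intro sum.cong) auto
    also have "\<dots> = of_real (max (\<mu> t) 0) *s t" using fin that by simp
    finally show ?thesis .
  qed
  have PN0: "P ** N = 0"
  proof (rule mat_eq_action)
    fix w
    have "(P ** N) *v w = P *v (N *v w)" by (simp add: matrix_vector_mul_assoc)
    also have "\<dots> = (\<Sum>s\<in>S. (of_real (max (- \<mu> s) 0) * ip s w) *s (P *v s))"
      unfolding Nw by (rule mv_smult_sum)
    also have "\<dots> = (\<Sum>s\<in>S. 0)"
      using Pt by (intro sum.cong refl) (simp add: vector_smult_assoc max_def)
    finally show "(P ** N) *v w = 0 *v w" by simp
  qed
  have uniq: "Q = P" if Q: "psd Q \<and> psd (Q - X) \<and> Q ** (Q - X) = 0" for Q
  proof (rule mat_eq_action)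
    fix w
    have Qs: "Q *v s = of_real (max (\<mu> s) 0) *s s" if "s \<in> S" for s
      using pos_part_eig[OF hX, of Q] Q eig that by blast
    have "Q *v w = (\<Sum>s\<in>S. ip s w *s (Q *v s))" by (subst exp[of w]) (rule mv_smult_sum)
    also have "\<dots> = (\<Sum>s\<in>S. (of_real (max (\<mu> s) 0) * ip s w) *s s)"
      using Qs by (intro sum.cong) (auto simp: vector_smult_assoc mult.commute)
    finally show "Q *v w = P *v w" by (simp add: Pw)
  qed
  have "pos_part X = P"
    unfolding pos_part_def
    by (rule the_equality) (use pP pN PXN PN0 uniq in auto)
  thus ?thesis using pP pN PXN by simp
qed

lemma pos_part_trace: "herm X \<Longrightarrow> 0 \<le> Re (trace (pos_part X))"
  using pos_part_props psd_trace by blast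



lemma sum_pair: "(\<Sum>p\<in>(UNIV::('a::finite\<times>'b::finite) set). f p) = (\<Sum>a\<in>UNIV. \<Sum>b\<in>UNIV. f (a,b))"
  by (simp add: sum.cartesian_product)

lemma sum_delta_pair1: "(\<Sum>a\<in>(UNIV::'a::finite set). \<Sum>b\<in>(UNIV::'b::finite set). if a = c then f a b else 0) = (\<Sum>b\<in>UNIV. f c b)"
proof -
  have "(\<Sum>b\<in>(UNIV::'b set). if a = c then f a b else 0) = (if a = c then \<Sum>b\<in>UNIV. f a b else 0)" for a
    by simp
  thus ?thesis by simp
qed
lemma sum_delta_pair2: "(\<Sum>a\<in>(UNIV::'a::finite set). \<Sum>b\<in>(UNIV::'b::finite set). if c = a then f a b else 0) = (\<Sum>b\<in>UNIV. f c b)"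
  using sum_delta_pair1[of c f] by (simp add: eq_commute)
lemma mult_if0: "(x::complex) * (if A then y else 0) = (if A then x * y else 0)"
  and if0_mult: "(if A then y else 0) * (x::complex) = (if A then y * x else 0)"
  and cnj_if0: "cnj (if A then y else 0) = (if A then cnj y else 0)"
  by simp_all

definition row :: "'a::finite \<Rightarrow> complex^('a\<times>'b::finite) \<Rightarrow> complex^'b" where
  "row a v = (\<chi> b. v$(a,b))"
definition emb :: "'a::finite \<Rightarrow> complex^'b::finite \<Rightarrow> complex^('a\<times>'b)" where
  "emb c w = (\<chi> p. if fst p = c then w$(snd p) else 0)"
definition ptr :: "complex^('a::finite\<times>'b::finite)^('a\<times>'b) \<Rightarrow> complex^'b^'b" where
  "ptr P = (\<chi> b b'. \<Sum>a\<in>UNIV. P$(a,b)$(a,b'))"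

lemma id_tensor_nth: "(id_tensor \<sigma>)$p$q = (if fst p = fst q then \<sigma>$(snd p)$(snd q) else 0)"
  by (simp add: id_tensor_def)

lemma ip_emb: "ip (emb c w) z = (\<Sum>b\<in>UNIV. cnj (w$b) * z$(c,b))"
  by (simp only: ip_def sum_pair emb_def vec_lambda_beta fst_conv snd_conv cnj_if0 if0_mult
       complex_cnj_zero mult_zero_left sum_delta_pair1)

lemma mv_emb: "((P::complex^('a::finite\<times>'b::finite)^('a\<times>'b)) *v emb c w)$p = (\<Sum>b'\<in>UNIV. P$p$(c,b') * w$b')"
  by (simp only: matrix_vector_mult_def sum_pair emb_def vec_lambda_beta fst_conv snd_conv mult_if0
       mult_zero_right sum_delta_pair1)

lemma emb_form:
  fixes P :: "complex^('a::finite\<times>'b::finite)^('a\<times>'b)"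
  shows "ip (emb c w) (P *v emb c w) = (\<Sum>b\<in>UNIV. \<Sum>b'\<in>UNIV. cnj (w$b) * P$(c,b)$(c,b') * w$b')"
  by (simp only: ip_emb mv_emb) (simp add: sum_distrib_left mult.assoc)

lemma ptr_form:
  fixes P :: "complex^('a::finite\<times>'b::finite)^('a\<times>'b)"
  shows "ip w (ptr P *v w) = (\<Sum>c\<in>UNIV. ip (emb c w) (P *v emb c w))"
proof -
  have "ip w (ptr P *v w) = (\<Sum>b\<in>UNIV. \<Sum>b'\<in>UNIV. \<Sum>c\<in>UNIV. cnj (w$b) * P$(c,b)$(c,b') * w$b')"
    by (simp add: ip_def matrix_vector_mult_def ptr_def sum_distrib_left sum_distrib_right mult.assoc)
  also have "\<dots> = (\<Sum>b\<in>UNIV. \<Sum>c\<in>UNIV. \<Sum>b'\<in>UNIV. cnj (w$b) * P$(c,b)$(c,b') * w$b')"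
    by (rule sum.cong[OF refl], rule sum.swap)
  also have "\<dots> = (\<Sum>c\<in>UNIV. \<Sum>b\<in>UNIV. \<Sum>b'\<in>UNIV. cnj (w$b) * P$(c,b)$(c,b') * w$b')"
    by (rule sum.swap)
  finally show ?thesis by (simp add: emb_form)
qed

lemma tensor_form:
  fixes v :: "complex^('a::finite\<times>'b::finite)"
  shows "ip v (id_tensor M *v v) = (\<Sum>a\<in>UNIV. ip (row a v) (M *v row a v))"
proof -
  have mv: "(id_tensor M *v v)$(a,b) = (\<Sum>b'\<in>UNIV. M$b$b' * v$(a,b'))" for a b
    by (simp only: matrix_vector_mult_def sum_pair id_tensor_nth vec_lambda_beta fst_conv snd_conv if0_mult
       mult_zero_left sum_delta_pair2)
  show ?thesis
    by (simp only: ip_def[of v] sum_pair mv) (simp add: ip_def row_def matrix_vector_mult_def)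
qed

lemma row_emb_sum: "(\<Sum>a\<in>UNIV. emb a (row a v)) = (v :: complex^('a::finite\<times>'b::finite))"
proof -
  have "(\<Sum>a\<in>UNIV. emb a (row a v))$p = v$p" for p
  proof -
    have "(\<Sum>a\<in>UNIV. emb a (row a v))$p = (\<Sum>a\<in>UNIV. if a = fst p then v$p else 0)"
      by (simp add: sum_component emb_def row_def)
    also have "\<dots> = v$p" by simp
    finally show ?thesis .
  qed
  thus ?thesis by (simp add: vec_eq_iff)
qed

lemma herm_ptr: assumes "herm P" shows "herm (ptr P)"
  unfolding herm_def
proof (intro allI)
  fix i j
  have "P$(a,i)$(a,j) = cnj (P$(a,j)$(a,i))" for a using assms herm_def by blast
  thus "ptr P $ i $ j = cnj (ptr P $ j $ i)" by (simp add: ptr_def cnj_sum)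
qed

lemma herm_id_tensor:
  fixes M :: "complex^'b::finite^'b"
  assumes "herm M" shows "herm (id_tensor M :: complex^('a::finite\<times>'b)^('a\<times>'b))"
  unfolding herm_def
proof (intro allI)
  fix p q :: "'a \<times> 'b"
  have "M$(snd p)$(snd q) = cnj (M$(snd q)$(snd p))" using assms herm_def by blast
  thus "id_tensor M $ p $ q = cnj (id_tensor M $ q $ p)" by (simp add: id_tensor_nth)
qed

lemma qf_ptr: "qf (ptr P) w = (\<Sum>c\<in>UNIV. qf P (emb c w))"
  by (simp add: qf_def ptr_form Re_sum)

lemma qf_tensor: "qf (id_tensor M) v = (\<Sum>a\<in>UNIV. qf M (row a v))"
  by (simp add: qf_def tensor_form Re_sum)

lemma psd_ptr: "psd P \<Longrightarrow> psd (ptr P)"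
  using herm_ptr by (auto simp: psd_iff qf_def[symmetric] qf_ptr intro!: sum_nonneg psd_qf)

lemma trace_ptr: "trace (ptr P) = trace P"
  by (simp add: trace_def ptr_def sum_pair) (rule sum.swap)

lemma trace_scaleR: "trace ((c::real) *\<^sub>R (A::complex^'n^'n)) = of_real c * trace A"
  by (simp only: trace_def mscaleR_nth) (simp add: sum_distrib_left)

lemma trace_mat1: "trace (mat 1 :: complex^'n^'n) = of_nat CARD('n)"
  by (simp add: trace_def mat_def)

lemma trace_add: "trace ((A::complex^'n^'n) + B) = trace A + trace B"
  by (simp add: trace_def sum.distrib)
lemma trace_diff: "trace ((A::complex^'n^'n) - B) = trace A - trace B"
  by (simp add: trace_def sum_subtractf)

lemma trace_id_tensor: "trace (id_tensor (M::complex^'b::finite^'b) :: complex^('a::finite\<times>'b)^('a\<times>'b))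
   = of_nat CARD('a) * trace M"
  by (simp add: trace_def sum_pair id_tensor_nth)

lemma id_tensor_add: "id_tensor (A + B) = id_tensor A + id_tensor B"
  by (simp add: vec_eq_iff id_tensor_nth)
lemma id_tensor_scaleR: "id_tensor ((c::real) *\<^sub>R A) = c *\<^sub>R id_tensor A"
  by (simp add: vec_eq_iff id_tensor_nth mscaleR_nth)
lemma id_tensor_mat1: "id_tensor (mat 1) = mat 1"
  by (auto simp: vec_eq_iff id_tensor_nth mat_def prod_eq_iff)

lemma bound_A:
  fixes P :: "complex^('a::finite\<times>'b::finite)^('a\<times>'b)"
  assumes p: "psd P"
  shows "psd (id_tensor (real CARD('a) *\<^sub>R ptr P) - P)"
proof -
  have hP: "herm P" using p psd_iff by blast
  have h: "herm (id_tensor (real CARD('a) *\<^sub>R ptr P) - P)"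
    by (intro herm_diff herm_id_tensor herm_scaleR herm_ptr hP)
  have "qf P v \<le> real CARD('a) * qf (id_tensor (ptr P)) v" for v
  proof -
    have "qf P v = qf P (\<Sum>a\<in>UNIV. emb a (row a v))" by (simp add: row_emb_sum)
    also have "\<dots> \<le> (\<Sum>a\<in>UNIV. sqrt (qf P (emb a (row a v))))^2"
      by (rule psd_block[OF p]) simp
    also have "\<dots> \<le> (\<Sum>a\<in>UNIV. (sqrt (qf P (emb a (row a v))))^2) * real CARD('a)"
      by (rule sum_squared_le_sum_of_squares)
    also have "\<dots> = (\<Sum>a\<in>UNIV. qf P (emb a (row a v))) * real CARD('a)"
      using psd_qf[OF p] by simp
    also have "(\<Sum>a\<in>UNIV. qf P (emb a (row a v))) \<le> (\<Sum>a\<in>UNIV. \<Sum>c\<in>UNIV. qf P (emb c (row a v)))"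
      by (intro sum_mono member_le_sum psd_qf[OF p]) auto
    also have "\<dots> = qf (id_tensor (ptr P)) v"
      by (simp add: qf_tensor qf_ptr)
    finally show ?thesis by (simp add: mult.commute)
  qed
  hence "0 \<le> qf (id_tensor (real CARD('a) *\<^sub>R ptr P) - P) v" for v
    by (simp add: qf_def mv_mdiff ip_diff_right id_tensor_scaleR mv_mscaleR ip_scale_right)
  with h show ?thesis by (simp add: psd_iff qf_def)
qed

lemma bound_omega:
  fixes P :: "complex^('a::finite\<times>'b::finite)^('a\<times>'b)"
  assumes p: "psd P"
  shows "\<exists>\<omega>::complex^'b^'b. psd \<omega> \<and> Re (trace \<omega>) = real (min CARD('a) CARD('b)) * Re (trace P)
           \<and> psd (id_tensor \<omega> - P)"
proof (cases "CARD('a) \<le> CARD('b)")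
  case True
  show ?thesis
    by (rule exI[of _ "real CARD('a) *\<^sub>R ptr P"])
       (use True bound_A[OF p] psd_ptr[OF p] in \<open>auto simp: trace_scaleR trace_ptr intro: psd_scaleR\<close>)
next
  case False
  have t: "0 \<le> Re (trace P)" by (rule psd_trace[OF p])
  show ?thesis
    apply (rule exI[of _ "Re (trace P) *\<^sub>R mat 1"])
    using False t psd_le_trace_id[OF p] psd_mat1
    by (auto simp: trace_scaleR id_tensor_scaleR id_tensor_mat1 trace_mat1 intro: psd_scaleR)
qed



definition Sset :: "complex^('a::finite \<times> 'b::finite)^('a \<times> 'b) \<Rightarrow> real set" where
  "Sset \<rho> = {l::real. \<exists>\<sigma>::complex^'b^'b. norm_state \<sigma> \<and>
       psd ((2 powr (-l)) *\<^sub>R (id_tensor \<sigma> :: complex^('a \<times> 'b)^('a \<times> 'b)) - \<rho>)}"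

lemma Hmin_Sset: "Hmin \<rho> = Sup (Sset \<rho>)"
  by (simp add: Hmin_def Sset_def)

lemma S_bound:
  fixes \<rho> :: "complex^('a::finite \<times> 'b::finite)^('a \<times> 'b)"
  assumes r: "subnorm_state \<rho>" and l: "l \<in> Sset \<rho>"
  shows "2 powr l * Re (trace \<rho>) \<le> real CARD('a)"
proof -
  obtain \<sigma> :: "complex^'b^'b" where s: "norm_state \<sigma>"
    and p: "psd ((2 powr (-l)) *\<^sub>R (id_tensor \<sigma> :: complex^('a \<times> 'b)^('a \<times> 'b)) - \<rho>)"
    using l by (auto simp: Sset_def)
  have "0 \<le> Re (trace ((2 powr (-l)) *\<^sub>R (id_tensor \<sigma> :: complex^('a \<times> 'b)^('a \<times> 'b)) - \<rho>))"
    by (rule psd_trace[OF p])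
  also have "\<dots> = 2 powr (-l) * real CARD('a) - Re (trace \<rho>)"
    using s by (simp add: trace_diff trace_scaleR trace_id_tensor norm_state_def)
  finally have "Re (trace \<rho>) \<le> 2 powr (-l) * real CARD('a)" by simp
  hence "2 powr l * Re (trace \<rho>) \<le> 2 powr l * (2 powr (-l) * real CARD('a))"
    by (simp add: mult_left_mono)
  also have "\<dots> = real CARD('a)" by (simp add: powr_minus)
  finally show ?thesis .
qed

lemma S_bdd:
  fixes \<rho> :: "complex^('a::finite \<times> 'b::finite)^('a \<times> 'b)"
  assumes r: "subnorm_state \<rho>"
  shows "bdd_above (Sset \<rho>)"
proof -
  have tp: "Re (trace \<rho>) > 0" using r by (simp add: subnorm_state_def)
  have "l \<le> log 2 (real CARD('a) / Re (trace \<rho>))" if "l \<in> Sset \<rho>" for l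
  proof -
    have "2 powr l \<le> real CARD('a) / Re (trace \<rho>)"
      using S_bound[OF r that] tp by (simp add: le_divide_eq)
    thus ?thesis using tp by (simp add: le_log_iff)
  qed
  thus ?thesis by (auto simp: bdd_above_def)
qed

lemma S_nonempty:
  fixes \<rho> :: "complex^('a::finite \<times> 'b::finite)^('a \<times> 'b)"
  assumes r: "subnorm_state \<rho>"
  shows "Sset \<rho> \<noteq> {}"
proof -
  have tp: "Re (trace \<rho>) > 0" using r by (simp add: subnorm_state_def)
  have pr: "psd \<rho>" using r by (simp add: subnorm_state_def)
  define d where "d = real CARD('b)"
  have dp: "d > 0" by (simp add: d_def)
  define \<sigma> :: "complex^'b^'b" where "\<sigma> = (1 / d) *\<^sub>R mat 1"
  have ns: "norm_state \<sigma>"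
    unfolding norm_state_def \<sigma>_def using dp
    by (auto simp: trace_scaleR trace_mat1 d_def intro: psd_scaleR psd_mat1)
  define l where "l = - log 2 (Re (trace \<rho>) * d)"
  have "2 powr (-l) = Re (trace \<rho>) * d" using tp dp by (simp add: l_def)
  hence "(2 powr (-l)) *\<^sub>R (id_tensor \<sigma> :: complex^('a \<times> 'b)^('a \<times> 'b)) = Re (trace \<rho>) *\<^sub>R mat 1"
    using dp by (simp add: \<sigma>_def id_tensor_scaleR id_tensor_mat1)
  hence "l \<in> Sset \<rho>" using ns psd_le_trace_id[OF pr] by (auto simp: Sset_def)
  thus ?thesis by auto
qed

lemma one_side:
  fixes \<rho> \<tau> :: "complex^('a::finite \<times> 'b::finite)^('a \<times> 'b)"
  assumes r: "subnorm_state \<rho>" and t: "subnorm_state \<tau>"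
  shows "Hmin \<rho> - Hmin \<tau> \<le> real CARD('a) * real (min CARD('a) CARD('b)) * Re (trace (pos_part (\<tau> - \<rho>)))
            / (ln 2 * Re (trace \<rho>))"
proof -
  define K where "K = real (min CARD('a) CARD('b))"
  define \<delta> where "\<delta> = Re (trace (pos_part (\<tau> - \<rho>)))"
  define R where "R = real CARD('a) * K * \<delta> / (ln 2 * Re (trace \<rho>))"
  have tp: "Re (trace \<rho>) > 0" using r by (simp add: subnorm_state_def)
  have pr: "psd \<rho>" using r by (simp add: subnorm_state_def)
  have pt: "psd \<tau>" using t by (simp add: subnorm_state_def)
  have hd: "herm (\<tau> - \<rho>)" using pr pt by (simp add: psd_iff herm_diff)
  define P where "P = pos_part (\<tau> - \<rho>)"
  have pP: "psd P" and pPX: "psd (P - (\<tau> - \<rho>))" using pos_part_props[OF hd] by (auto simp: P_def)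
  obtain \<omega> :: "complex^'b^'b" where pw: "psd \<omega>" and tw: "Re (trace \<omega>) = K * \<delta>"
    and bw: "psd (id_tensor \<omega> - P)"
    using bound_omega[OF pP] by (auto simp: K_def \<delta>_def P_def)
  have dnn: "0 \<le> \<delta>" using psd_trace[OF pP] by (simp add: \<delta>_def P_def)
  have Knn: "0 \<le> K" by (simp add: K_def)
  have key: "l \<le> Hmin \<tau> + R" if l: "l \<in> Sset \<rho>" for l
  proof -
    obtain \<sigma> :: "complex^'b^'b" where s: "norm_state \<sigma>"
      and p: "psd ((2 powr (-l)) *\<^sub>R (id_tensor \<sigma> :: complex^('a \<times> 'b)^('a \<times> 'b)) - \<rho>)"
      using l by (auto simp: Sset_def)
    define T where "T = K * \<delta>"
    have Tnn: "0 \<le> T" using dnn Knn by (simp add: T_def)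
    define c where "c = 2 powr (-l) + T"
    have cp: "c > 0" using Tnn by (simp add: c_def add_pos_nonneg)
    define \<sigma>' where "\<sigma>' = (1 / c) *\<^sub>R ((2 powr (-l)) *\<^sub>R \<sigma> + \<omega>)"
    have ps: "psd \<sigma>" using s by (simp add: norm_state_def)
    have trw: "trace \<omega> = of_real T" using psd_trace_real[OF pw] tw by (simp add: T_def)
    have ns': "norm_state \<sigma>'"
      unfolding norm_state_def
    proof
      show "psd \<sigma>'" unfolding \<sigma>'_def using cp ps pw by (intro psd_scaleR psd_add) auto
      have "trace \<sigma>' = of_real (1/c) * (of_real (2 powr (-l)) * 1 + of_real T)"
        using s by (simp add: \<sigma>'_def trace_scaleR trace_add trw norm_state_def)
      also have "\<dots> = of_real (1/c) * of_real c" by (simp add: c_def)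
      also have "\<dots> = 1" using cp by (simp flip: of_real_mult)
      finally show "trace \<sigma>' = 1" .
    qed
    define l' where "l' = - log 2 c"
    have c2: "2 powr (-l') = c" using cp by (simp add: l'_def)
    have eq: "(2 powr (-l')) *\<^sub>R (id_tensor \<sigma>' :: complex^('a \<times> 'b)^('a \<times> 'b)) - \<tau> =
        ((2 powr (-l)) *\<^sub>R (id_tensor \<sigma> :: complex^('a \<times> 'b)^('a \<times> 'b)) - \<rho>) + (P - (\<tau> - \<rho>)) + (id_tensor \<omega> - P)"
      unfolding c2 \<sigma>'_def using cp by (simp add: id_tensor_scaleR id_tensor_add algebra_simps)
    have "psd (((2 powr (-l)) *\<^sub>R (id_tensor \<sigma> :: complex^('a \<times> 'b)^('a \<times> 'b)) - \<rho>) + (P - (\<tau> - \<rho>)) + (id_tensor \<omega> - P))"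
      by (intro psd_add p pPX bw)
    hence "psd ((2 powr (-l')) *\<^sub>R (id_tensor \<sigma>' :: complex^('a \<times> 'b)^('a \<times> 'b)) - \<tau>)"
      by (simp only: eq)
    hence l'S: "l' \<in> Sset \<tau>" using ns' by (auto simp: Sset_def)
    have l'le: "l' \<le> Hmin \<tau>" unfolding Hmin_Sset by (rule cSup_upper[OF l'S S_bdd[OF t]])
    have "l - l' = log 2 (2 powr l * c)"
      using cp by (simp add: l'_def log_mult)
    also have "2 powr l * c = 1 + 2 powr l * T"
      by (simp add: c_def distrib_left powr_minus)
    also have "log 2 (1 + 2 powr l * T) = ln (1 + 2 powr l * T) / ln 2"
      by (simp add: log_def)
    also have "\<dots> \<le> (2 powr l * T) / ln 2"
      using Tnn by (intro divide_right_mono ln_add_one_self_le_self) auto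
    also have "\<dots> \<le> (real CARD('a) / Re (trace \<rho>) * T) / ln 2"
    proof -
      have "2 powr l \<le> real CARD('a) / Re (trace \<rho>)"
        using S_bound[OF r l] tp by (simp add: le_divide_eq)
      thus ?thesis using Tnn by (intro divide_right_mono mult_right_mono) auto
    qed
    also have "\<dots> = R" by (simp add: R_def T_def mult.commute mult.left_commute)
    finally show ?thesis using l'le by simp
  qed
  have "Hmin \<rho> \<le> Hmin \<tau> + R"
    unfolding Hmin_Sset[of \<rho>] by (rule cSup_least[OF S_nonempty[OF r]]) (rule key)
  thus ?thesis by (simp add: R_def K_def \<delta>_def)
qed

theorem lemma11:
  fixes \<rho> \<tau> :: "complex^('a::finite \<times> 'b::finite)^('a \<times> 'b)"
  assumes "subnorm_state \<rho>" and "subnorm_state \<tau>"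
  shows "\<bar>Hmin \<rho> - Hmin \<tau>\<bar> \<le>
    real CARD('a) * real (min CARD('a) CARD('b)) * gen_trace_dist \<rho> \<tau>
      / (ln 2 * min (Re (trace \<rho>)) (Re (trace \<tau>)))"
proof -
  define C where "C = real CARD('a) * real (min CARD('a) CARD('b))"
  define m where "m = min (Re (trace \<rho>)) (Re (trace \<tau>))"
  define D where "D = gen_trace_dist \<rho> \<tau>"
  have Cnn: "0 \<le> C" by (simp add: C_def)
  have mp: "m > 0" using assms by (simp add: m_def subnorm_state_def)
  have pr: "psd \<rho>" and pt: "psd \<tau>" using assms by (auto simp: subnorm_state_def)
  have h1: "herm (\<tau> - \<rho>)" and h2: "herm (\<rho> - \<tau>)" using pr pt by (auto simp: psd_iff herm_diff)
  have d1: "Re (trace (pos_part (\<tau> - \<rho>))) \<le> D" and d2: "Re (trace (pos_part (\<rho> - \<tau>))) \<le> D"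
    by (auto simp: D_def gen_trace_dist_def)
  have n1: "0 \<le> Re (trace (pos_part (\<tau> - \<rho>)))" and n2: "0 \<le> Re (trace (pos_part (\<rho> - \<tau>)))"
    using pos_part_trace[OF h1] pos_part_trace[OF h2] by auto
  have lnp: "ln (2::real) > 0" by simp
  have gen: "C * x / (ln 2 * y) \<le> C * D / (ln 2 * m)" if "0 \<le> x" "x \<le> D" "m \<le> y" for x y
  proof -
    have "C * x / (ln 2 * y) \<le> C * D / (ln 2 * y)"
      using that Cnn mp lnp by (intro divide_right_mono mult_left_mono) auto
    also have "\<dots> \<le> C * D / (ln 2 * m)"
      using that Cnn mp lnp by (intro divide_left_mono mult_left_mono mult_nonneg_nonneg mult_pos_pos) auto
    finally show ?thesis .
  qed
  have a: "Hmin \<rho> - Hmin \<tau> \<le> C * D / (ln 2 * m)"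
    using one_side[OF assms] gen[OF n1 d1, of "Re (trace \<rho>)"] by (simp add: C_def m_def)
  have b: "Hmin \<tau> - Hmin \<rho> \<le> C * D / (ln 2 * m)"
    using one_side[OF assms(2,1)] gen[OF n2 d2, of "Re (trace \<tau>)"] by (simp add: C_def m_def)
  from a b show ?thesis by (simp add: C_def D_def m_def abs_le_iff)
qed

end
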